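(* Consider any sequences generated by Algorithm 3 with parameters satisfying $0<\alpha\le\mu/2$ and $\eta\le\frac1{4\tau L}$, and let $\delta:=\min\{1,\frac1{2\eta L}\}$. Then for every $k\ge0$, \[ \frac1\eta\|x^{k+1}-x^*\|^2 \le \frac1\eta\|x^k-x^*\|^2 - \frac{3\alpha}4\|x^{k+1}-x^*\|^2 + \frac{2(1-\tau)}\tau\mathrm{D}_r(x_f^k,x^* ) - \frac{2-\tau}\tau\mathrm{D}_r(x_f^{k+1},x^* ) - \frac{\eta\delta}4\|y^{k+1}-y^*\|^2 + 2\langle y^{k+1}-y^*,x^{k+1}-x^*\rangle. \]
   Context: $F:\mathbb{R}^{nd}\to\mathbb{R}$ is differentiable, $\mu$-strongly convex and $L$-smooth, $0<\mu\le L$. $\mathbf{W}$ is a symmetric positive semidefinite $nd\times nd$ matrix whose kernel is the consensus space $\{(x_1,\dots,x_n)\in(\mathbb{R}^d)^n:x_1=\dots=x_n\}$. $x^*$ is the unique minimizer of $F$ over $\ker(\mathbf{W})$; $y^*:=\nabla F(x^* )-\frac\mu2x^*$, $z^*:=-\nabla F(x^* )$. $r(x):=F(x)-\frac\mu4\|x\|^2$, $h(y,z):=\frac1\mu\|y+z\|^2+\frac\nu2\|y\|^2$. $\mathrm{D}_r(u,v):=r(u)-r(v)-\langle\nabla r(v),u-v\rangle$. Algorithm 3: given $x^0,y^0\in\mathbb{R}^{nd}$, $z^0\in\mathrm{range}(\mathbf{W})$, parameters $\eta,\theta,\lambda,\alpha,\beta,\gamma,\nu>0$, $\tau,\sigma\in(0,1)$,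 set $x_f^0=x^0$, $y_f^0=y^0$, $z_f^0=z^0$, and for $k\ge0$: $x_g^k=\tau x^k+(1-\tau)x_f^k$, $y_g^k=\sigma y^k+(1-\sigma)y_f^k$, $z_g^k=\sigma z^k+(1-\sigma)z_f^k$; $(x^{k+1},y^{k+1})$ satisfies $x^{k+1} = x^k + \eta\alpha(x_g^k-x^{k+1}) - \eta\nabla r(x_g^k) + \eta y^{k+1}$ and $y^{k+1} = y^k + \theta\beta(y_g^k - y^{k+1}) - \theta\nabla_y h(y_g^k,z_g^k) + \theta\nu y^{k+1} - \theta x^{k+1}$; $z^{k+1} = z^k + \lambda\gamma(z_g^k - z^{k+1}) - \lambda\mathbf{W}\nabla_z h(y_g^k,z_g^k)$; $x_f^{k+1}=x_g^k+\frac{2\tau}{2-\tau}(x^{k+1}-x^k)$, $y_f^{k+1}=y_g^k+\sigma(y^{k+1}-y^k)$, $z_f^{k+1}=z_g^k+\sigma(z^{k+1}-z^k)$. *)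

theory Defs
  imports "HOL-Analysis.Analysis"
begin

text \<open>Points of R^{nd} are represented as n-tuples of d-vectors: real^'d^'n.\<close>

definition consensus :: "(real^'d^'n) set" where
  "consensus = {x. \<forall>i j. x $ i = x $ j}"

definition strongly_convex :: "real \<Rightarrow> ('a::real_inner \<Rightarrow> real) \<Rightarrow> bool" where
  "strongly_convex mu F \<longleftrightarrow> convex_on UNIV (\<lambda>x. F x - mu / 2 * norm x ^ 2)"

definition L_smooth :: "real \<Rightarrow> ('a::real_inner \<Rightarrow> 'a) \<Rightarrow> bool" where
  "L_smooth L gF \<longleftrightarrow> (\<forall>x y. norm (gF x - gF y) \<le> L * norm (x - y))"

definition rfun :: "real \<Rightarrow> ('a::real_inner \<Rightarrow> real) \<Rightarrow> 'a \<Rightarrow> real" where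
  "rfun mu F x = F x - mu / 4 * norm x ^ 2"

definition grad_r :: "real \<Rightarrow> ('a::real_inner \<Rightarrow> 'a) \<Rightarrow> 'a \<Rightarrow> 'a" where
  "grad_r mu gF x = gF x - (mu / 2) *\<^sub>R x"

definition Dr :: "real \<Rightarrow> ('a::real_inner \<Rightarrow> real) \<Rightarrow> ('a \<Rightarrow> 'a) \<Rightarrow> 'a \<Rightarrow> 'a \<Rightarrow> real" where
  "Dr mu F gF u v = rfun mu F u - rfun mu F v - inner (grad_r mu gF v) (u - v)"

text \<open>Partial gradients of h(y,z) = (1/mu)|y+z|^2 + (nu/2)|y|^2.\<close>
definition grad_y_h :: "real \<Rightarrow> real \<Rightarrow> 'a::real_inner \<Rightarrow> 'a \<Rightarrow> 'a" where
  "grad_y_h mu nu y z = (2 / mu) *\<^sub>R (y + z) + nu *\<^sub>R y"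

definition grad_z_h :: "real \<Rightarrow> 'a::real_inner \<Rightarrow> 'a \<Rightarrow> 'a" where
  "grad_z_h mu y z = (2 / mu) *\<^sub>R (y + z)"

end

theory Submission
  imports Defs
begin

lemma line_deriv:
  fixes F :: "'a::real_inner \<Rightarrow> real"
  assumes grad: "\<And>u. (F has_derivative (\<lambda>h. inner (gF u) h)) (at u)"
    and D: "D = inner (gF (v + t *\<^sub>R d)) d"
  shows "((\<lambda>t. F (v + t *\<^sub>R d)) has_real_derivative D) (at t within S)"
proof -
  have 1: "((\<lambda>t. v + t *\<^sub>R d) has_derivative (\<lambda>h. h *\<^sub>R d)) (at t within S)"
    by (auto intro!: derivative_eq_intros)
  from has_derivative_compose[OF 1 grad]
  show ?thesis unfolding D has_field_derivative_def by (simp add: mult_commute_abs)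
qed

lemma norm_line: "norm (v + t *\<^sub>R d) ^ 2 = norm v ^ 2 + 2 * t * inner v d + t^2 * norm d ^ 2"
  for v d :: "'a::real_inner"
  by (simp only: power2_norm_eq_inner inner_add_left inner_add_right inner_scaleR_left inner_scaleR_right) (simp add: inner_commute power2_eq_square algebra_simps)

lemma grad_ineq:
  fixes F :: "'a::real_inner \<Rightarrow> real"
  assumes grad: "\<And>u. (F has_derivative (\<lambda>h. inner (gF u) h)) (at u)"
    and sc: "strongly_convex mu F"
  shows "F u - F v - inner (gF v) (u - v) \<ge> mu / 2 * norm (u - v) ^ 2"
proof -
  define d where "d = u - v"
  define g where "g = (\<lambda>x. F x - mu / 2 * norm x ^ 2)"
  have cg: "convex_on UNIV g" using sc unfolding strongly_convex_def g_def .
  define \<phi> where "\<phi> = (\<lambda>t. F (v + t *\<^sub>R d) - mu / 2 * (norm v ^ 2 + 2 * t * inner v d + t^2 * norm d ^ 2))"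
  have phig: "\<phi> t = g (v + t *\<^sub>R d)" for t
    unfolding \<phi>_def g_def norm_line ..
  have cphi: "convex_on UNIV \<phi>"
  proof (rule convex_onI)
    fix t a b :: real assume t: "t > 0" "t < 1"
    have e: "v + ((1 - t) *\<^sub>R a + t *\<^sub>R b) *\<^sub>R d = (1 - t) *\<^sub>R (v + a *\<^sub>R d) + t *\<^sub>R (v + b *\<^sub>R d)"
      by (simp add: algebra_simps)
    show "\<phi> ((1 - t) *\<^sub>R a + t *\<^sub>R b) \<le> (1 - t) * \<phi> a + t * \<phi> b"
      unfolding phig e using convex_onD[OF cg, of t "v + a *\<^sub>R d" "v + b *\<^sub>R d"] t by simp
  qed simp
  have der: "(\<phi> has_real_derivative (inner (gF v) d - mu * inner v d)) (at 0 within UNIV)"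
  proof -
    have "(\<phi> has_real_derivative (inner (gF (v + 0 *\<^sub>R d)) d - mu / 2 * (0 + 2 * inner v d + 2 * 0 * norm d ^ 2))) (at 0 within UNIV)"
      unfolding \<phi>_def
      by (intro derivative_eq_intros line_deriv[OF grad]) (auto simp: power2_eq_square)
    thus ?thesis by simp
  qed
  have "\<phi> 1 - \<phi> 0 \<ge> (inner (gF v) d - mu * inner v d) * (1 - 0)"
    by (rule convex_on_imp_above_tangent[OF cphi]) (use der in auto)
  thus ?thesis unfolding \<phi>_def d_def
    by (simp add: norm_line algebra_simps power2_norm_eq_inner inner_diff_left inner_diff_right inner_commute)
qed

lemma descent:
  fixes F :: "'a::real_inner \<Rightarrow> real"
  assumes grad: "\<And>u. (F has_derivative (\<lambda>h. inner (gF u) h)) (at u)"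
    and sm: "L_smooth L gF"
  shows "F u - F v - inner (gF v) (u - v) \<le> L / 2 * norm (u - v) ^ 2"
proof -
  define d where "d = u - v"
  define \<phi> where "\<phi> = (\<lambda>t. F (v + t *\<^sub>R d) - t * inner (gF v) d - L / 2 * t^2 * norm d ^ 2)"
  have der: "(\<phi> has_real_derivative (inner (gF (v + t *\<^sub>R d)) d - inner (gF v) d - L * t * norm d ^ 2)) (at t)" for t
  proof -
    have "(\<phi> has_real_derivative (inner (gF (v + t *\<^sub>R d)) d - 1 * inner (gF v) d - L / 2 * (2 * t) * norm d ^ 2)) (at t)"
      unfolding \<phi>_def
      by (intro derivative_eq_intros line_deriv[OF grad]) (auto simp: power2_eq_square)
    thus ?thesis by simp
  qed
  obtain z where z: "0 < z" "z < 1" "\<phi> 1 - \<phi> 0 = (1 - 0) * (inner (gF (v + z *\<^sub>R d)) d - inner (gF v) d - L * z * norm d ^ 2)"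
    using MVT2[of 0 1 \<phi>, OF _ der] by auto
  have "inner (gF (v + z *\<^sub>R d)) d - inner (gF v) d = inner (gF (v + z *\<^sub>R d) - gF v) d"
    by (simp add: inner_diff_left)
  also have "\<dots> \<le> norm (gF (v + z *\<^sub>R d) - gF v) * norm d" by (rule norm_cauchy_schwarz)
  also have "\<dots> \<le> (L * norm (z *\<^sub>R d)) * norm d"
    proof (intro mult_right_mono)
    have "norm (gF (v + z *\<^sub>R d) - gF v) \<le> L * norm ((v + z *\<^sub>R d) - v)"
      using sm unfolding L_smooth_def by blast
    thus "norm (gF (v + z *\<^sub>R d) - gF v) \<le> L * norm (z *\<^sub>R d)" by simp
  qed simp
  also have "\<dots> = L * z * norm d ^ 2" using z by (simp add: power2_eq_square)
  finally have "\<phi> 1 - \<phi> 0 \<le> 0" using z by simp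
  thus ?thesis unfolding \<phi>_def d_def by simp
qed


lemma Dr_F: "Dr mu F gF u v = (F u - F v - inner (gF v) (u - v)) - mu / 4 * norm (u - v) ^ 2"
  for u v :: "'a::real_inner"
  unfolding Dr_def rfun_def grad_r_def
  by (simp add: power2_norm_eq_inner inner_diff_left inner_diff_right inner_commute algebra_simps)

lemma three_point: "Dr mu F gF a c = Dr mu F gF b c + inner (grad_r mu gF b - grad_r mu gF c) (a - b) + Dr mu F gF a b"
  for a b c :: "'a::real_inner"
  unfolding Dr_def
  by (simp add: inner_diff_left inner_diff_right algebra_simps)

lemma coco:
  fixes u v :: "'a::real_inner"
  assumes L: "L > 0"
    and lo: "\<And>a b. Dr mu F gF a b \<ge> 0"
    and up: "\<And>a b. Dr mu F gF a b \<le> L / 2 * norm (a - b) ^ 2"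
  shows "Dr mu F gF u v \<ge> 1 / (2 * L) * norm (grad_r mu gF u - grad_r mu gF v) ^ 2"
proof -
  define G where "G = grad_r mu gF u - grad_r mu gF v"
  define w where "w = u - (1 / L) *\<^sub>R G"
  have tp: "Dr mu F gF w v = Dr mu F gF u v + inner G (w - u) + Dr mu F gF w u"
    unfolding G_def by (rule three_point)
  have i: "inner G (w - u) = - (1 / L) * norm G ^ 2"
    unfolding w_def by (simp add: power2_norm_eq_inner)
  have n: "norm (w - u) ^ 2 = (1 / L) ^ 2 * norm G ^ 2"
    unfolding w_def using L by (simp add: power_divide)
  have "Dr mu F gF w u \<le> L / 2 * ((1 / L) ^ 2 * norm G ^ 2)" using up[of w u] n by simp
  also have "\<dots> = 1 / (2 * L) * norm G ^ 2" using L by (simp add: power2_eq_square field_simps)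
  finally have "Dr mu F gF w u \<le> 1 / (2 * L) * norm G ^ 2" .
  moreover have "1 / L * norm G ^ 2 = 2 * (1 / (2 * L) * norm G ^ 2)" using L by (simp add: field_simps)
  ultimately show ?thesis using tp i lo[of w v] unfolding G_def[symmetric] by linarith
qed

lemma norm3: "norm (a + b + c) ^ 2 \<le> 2 * norm a ^ 2 + 4 * norm b ^ 2 + 4 * norm c ^ 2"
  for a b c :: "'a::real_inner"
proof -
  have two: "norm (p + q) ^ 2 \<le> 2 * norm p ^ 2 + 2 * norm q ^ 2" for p q :: 'a
  proof -
    have "0 \<le> norm (p - q) ^ 2" by simp
    thus ?thesis by (simp add: power2_norm_eq_inner inner_add_left inner_add_right inner_diff_left inner_diff_right inner_commute)
  qed
  have "norm (a + (b + c)) ^ 2 \<le> 2 * norm a ^ 2 + 2 * norm (b + c) ^ 2" by (rule two)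
  also have "\<dots> \<le> 2 * norm a ^ 2 + 2 * (2 * norm b ^ 2 + 2 * norm c ^ 2)" using two[of b c] by simp
  finally show ?thesis by (simp add: add.assoc)
qed

lemma final_arith:
  fixes N A P Q X GG YY pe qe Ge Ye Gg Gp Gf0 Gf1 Dg Ds Df0 Df1 R0 R1 eta alpha tau L mu delta :: real
  assumes E1: "N = A + 2 * pe - P" and E2: "pe = eta * (Ye - alpha * qe - Ge)"
    and E3: "2 * qe = N + Q - X"
    and E4: "tau * Ge = tau * Gg - (1 - tau) * Gf0 + tau * Gp"
    and E5: "Gf1 = (2 * tau / (2 - tau)) * Gp"
    and T1: "Gf0 = Df0 - Dg - R0" and T2: "Gf1 = Df1 - Dg - R1" and T3: "Gg = Dg + Ds"
    and R0: "R0 \<ge> 0" and R1: "R1 \<le> L / 2 * ((2 * tau / (2 - tau)) ^ 2 * P)"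
    and Dg: "Dg \<ge> mu / 4 * X" and Ds1: "Ds \<ge> mu / 4 * X" and Ds2: "Ds \<ge> 1 / (2 * L) * GG"
    and YY: "YY \<le> 2 * ((1 / eta) ^ 2 * P) + 4 * (alpha ^ 2 * Q) + 4 * GG"
    and nn: "N \<ge> 0" "P \<ge> 0" "Q \<ge> 0" "X \<ge> 0" "GG \<ge> 0"
    and eta: "eta > 0" and tau: "0 < tau" "tau < 1" and alpha: "0 < alpha" "alpha \<le> mu / 2"
    and muL: "0 < mu" "mu \<le> L" and eta_le: "eta \<le> 1 / (4 * tau * L)"
    and delta: "delta = min 1 (1 / (2 * eta * L))"
  shows "(1 / eta) * N \<le> (1 / eta) * A - (3 * alpha / 4) * N + (2 * (1 - tau) / tau) * Df0
           - ((2 - tau) / tau) * Df1 - (eta * delta / 4) * YY + 2 * Ye"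
proof -
  have L: "L > 0" using muL by linarith
  have d1: "delta \<le> 1" and d0: "delta > 0" using delta eta L by auto
  have d2: "eta * delta \<le> 1 / (2 * L)"
  proof -
    have "delta \<le> 1 / (2 * eta * L)" using delta by simp
    hence "eta * delta \<le> eta * (1 / (2 * eta * L))" by (rule mult_left_mono) (use eta in simp)
    moreover have "eta * (1 / (2 * eta * L)) = 1 / (2 * L)" using eta by simp
    ultimately show ?thesis by simp
  qed
  have K1: "(1 / eta) * N = (1 / eta) * A + alpha * X - alpha * Q - alpha * N - 2 * Ge + 2 * Ye - (1 / eta) * P"
  proof -
    have "(1 / eta) * N = (1 / eta) * A + (2 / eta) * pe - (1 / eta) * P" unfolding E1 by (simp add: algebra_simps)
    moreover have "(2 / eta) * pe = 2 * Ye - alpha * (2 * qe) - 2 * Ge" using E2 eta by (simp add: field_simps)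
    moreover have "alpha * (2 * qe) = alpha * N + alpha * Q - alpha * X" unfolding E3 by (simp add: algebra_simps)
    ultimately show ?thesis by linarith
  qed
  have K2: "- 2 * Ge = - Dg - 2 * Ds + (2 * (1 - tau) / tau) * Df0 - ((2 - tau) / tau) * Df1
              - (2 * (1 - tau) / tau) * R0 + ((2 - tau) / tau) * R1" (is "_ = ?R")
  proof -
    have t2: "2 - tau \<noteq> 0" using tau by simp
    have gp: "2 * tau * Gp = (2 - tau) * Gf1" using E5 t2 by (simp add: field_simps)
    have "tau * (- 2 * Ge) = - tau * Dg - 2 * tau * Ds + 2 * (1 - tau) * Df0 - (2 - tau) * Df1
              - 2 * (1 - tau) * R0 + (2 - tau) * R1"
      using E4 gp T1 T2 T3 by (simp add: algebra_simps)
    moreover have "tau * (- Dg - 2 * Ds + (2 * (1 - tau) / tau) * Df0 - ((2 - tau) / tau) * Df1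
              - (2 * (1 - tau) / tau) * R0 + ((2 - tau) / tau) * R1) = - tau * Dg - 2 * tau * Ds + 2 * (1 - tau) * Df0 - (2 - tau) * Df1
              - 2 * (1 - tau) * R0 + (2 - tau) * R1"
      using tau by (simp add: field_simps)
    ultimately have "tau * (- 2 * Ge) = tau * ?R" by linarith
    thus ?thesis by (rule mult_left_cancel[THEN iffD1, rotated]) (use tau in simp)
  qed
  have K3: "((2 - tau) / tau) * R1 \<le> (1 / (2 * eta)) * P"
  proof -
    have c: "(2 - tau) / tau \<ge> 0" using tau by simp
    have "((2 - tau) / tau) * R1 \<le> ((2 - tau) / tau) * (L / 2 * ((2 * tau / (2 - tau)) ^ 2 * P))"
      using R1 c by (rule mult_left_mono)
    also have "\<dots> = (2 * tau * L / (2 - tau)) * P"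
    proof -
      have t2: "2 - tau \<noteq> 0" using tau by simp
      have gen: "c \<noteq> 0 \<Longrightarrow> (c / tau) * (L / 2 * ((2 * tau / c) ^ 2 * P)) = (2 * tau * L / c) * P" for c
        using tau by (simp add: power2_eq_square field_simps)
      show ?thesis by (rule gen[OF t2])
    qed
    also have "\<dots> \<le> (2 * tau * L) * P"
    proof (rule mult_right_mono[OF _ nn(2)])
      have "2 * tau * L \<ge> 0" using tau L by simp
      thus "2 * tau * L / (2 - tau) \<le> 2 * tau * L" using tau by (simp add: divide_le_eq mult_le_cancel_left1 mult_left_le)
    qed
    also have "\<dots> \<le> (1 / (2 * eta)) * P"
    proof (rule mult_right_mono[OF _ nn(2)])
      have "eta * (4 * tau * L) \<le> 1" using eta_le tau L eta by (simp add: field_simps)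
      thus "2 * tau * L \<le> 1 / (2 * eta)" using eta by (simp add: field_simps)
    qed
    finally show ?thesis .
  qed
  have K4: "(eta * delta / 4) * YY \<le> (1 / (2 * eta)) * P + alpha * Q + (1 / (2 * L)) * GG"
  proof -
    have c: "eta * delta / 4 \<ge> 0" using eta d0 by simp
    have "(eta * delta / 4) * YY \<le> (eta * delta / 4) * (2 * ((1 / eta) ^ 2 * P) + 4 * (alpha ^ 2 * Q) + 4 * GG)"
      using YY c by (rule mult_left_mono)
    also have "\<dots> = (delta / (2 * eta)) * P + ((eta * delta) * alpha) * (alpha * Q) + (eta * delta) * GG"
      using eta by (simp add: power2_eq_square field_simps)
    also have "\<dots> \<le> (1 / (2 * eta)) * P + 1 * (alpha * Q) + (1 / (2 * L)) * GG"
    proof -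
      have a: "(delta / (2 * eta)) * P \<le> (1 / (2 * eta)) * P"
        using d1 eta nn(2) by (intro mult_right_mono divide_right_mono) auto
      have "(eta * delta) * alpha \<le> (1 / (2 * L)) * alpha" using d2 alpha by (intro mult_right_mono) auto
      also have "\<dots> \<le> 1" using alpha muL L by (simp add: field_simps)
      finally have b: "((eta * delta) * alpha) * (alpha * Q) \<le> 1 * (alpha * Q)"
        using alpha nn(3) by (intro mult_right_mono) auto
      have c: "(eta * delta) * GG \<le> (1 / (2 * L)) * GG" using d2 nn(5) by (rule mult_right_mono)
      show ?thesis using a b c by linarith
    qed
    finally show ?thesis by simp
  qed
  have K5: "alpha * X \<le> Dg + Ds"
  proof -
    have "alpha * X \<le> (mu / 2) * X" using alpha nn(4) by (intro mult_right_mono) auto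
    thus ?thesis using Dg Ds1 by linarith
  qed
  have K6: "(2 * (1 - tau) / tau) * R0 \<ge> 0" using tau R0 by simp
  have K7: "(3 * alpha / 4) * N = alpha * N - (alpha * N) / 4" by simp
  have K8: "(alpha * N) / 4 \<ge> 0" using alpha nn(1) by simp
  show ?thesis using K1 K2 K3 K4 K5 K6 K7 K8 Ds2 by linarith
qed

theorem mainTheorem10:
  fixes F :: "real^'d^'n \<Rightarrow> real" and gF :: "real^'d^'n \<Rightarrow> real^'d^'n"
    and W :: "real^'d^'n \<Rightarrow> real^'d^'n"
    and mu L eta theta lambda alpha beta gamma nu tau sigma :: real
    and xs :: "real^'d^'n"
    and x y z xf yf zf xg yg zg :: "nat \<Rightarrow> real^'d^'n"
  assumes grad: "\<And>u. (F has_derivative (\<lambda>h. inner (gF u) h)) (at u)"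
    and sconv: "strongly_convex mu F"
    and smooth: "L_smooth L gF"
    and muL: "0 < mu" "mu \<le> L"
    and Wlin: "linear W"
    and Wsym: "\<And>u v. inner (W u) v = inner u (W v)"
    and Wpsd: "\<And>u. 0 \<le> inner (W u) u"
    and Wker: "{u. W u = 0} = consensus"
    and xs_cons: "xs \<in> consensus"
    and xs_min: "\<And>u. u \<in> consensus \<Longrightarrow> F xs \<le> F u"
    and params: "0 < eta" "0 < theta" "0 < lambda" "0 < alpha" "0 < beta" "0 < gamma" "0 < nu"
    and tau: "0 < tau" "tau < 1"
    and sigma: "0 < sigma" "sigma < 1"
    and z0: "z 0 \<in> range W"
    and init: "xf 0 = x 0" "yf 0 = y 0" "zf 0 = z 0"
    and xg_def: "\<And>k. xg k = tau *\<^sub>R x k + (1 - tau) *\<^sub>R xf k"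
    and yg_def: "\<And>k. yg k = sigma *\<^sub>R y k + (1 - sigma) *\<^sub>R yf k"
    and zg_def: "\<And>k. zg k = sigma *\<^sub>R z k + (1 - sigma) *\<^sub>R zf k"
    and x_upd: "\<And>k. x (Suc k) = x k + (eta * alpha) *\<^sub>R (xg k - x (Suc k))
                   - eta *\<^sub>R grad_r mu gF (xg k) + eta *\<^sub>R y (Suc k)"
    and y_upd: "\<And>k. y (Suc k) = y k + (theta * beta) *\<^sub>R (yg k - y (Suc k))
                   - theta *\<^sub>R grad_y_h mu nu (yg k) (zg k) + (theta * nu) *\<^sub>R y (Suc k)
                   - theta *\<^sub>R x (Suc k)"
    and z_upd: "\<And>k. z (Suc k) = z k + (lambda * gamma) *\<^sub>R (zg k - z (Suc k))
                   - lambda *\<^sub>R W (grad_z_h mu (yg k) (zg k))"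
    and xf_upd: "\<And>k. xf (Suc k) = xg k + (2 * tau / (2 - tau)) *\<^sub>R (x (Suc k) - x k)"
    and yf_upd: "\<And>k. yf (Suc k) = yg k + sigma *\<^sub>R (y (Suc k) - y k)"
    and zf_upd: "\<And>k. zf (Suc k) = zg k + sigma *\<^sub>R (z (Suc k) - z k)"
    and alpha_le: "alpha \<le> mu / 2"
    and eta_le: "eta \<le> 1 / (4 * tau * L)"
  shows "let ys = gF xs - (mu / 2) *\<^sub>R xs;
             \<delta> = min 1 (1 / (2 * eta * L))
         in \<forall>k. (1 / eta) * norm (x (Suc k) - xs) ^ 2
              \<le> (1 / eta) * norm (x k - xs) ^ 2
                 - (3 * alpha / 4) * norm (x (Suc k) - xs) ^ 2
                 + (2 * (1 - tau) / tau) * Dr mu F gF (xf k) xs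
                 - ((2 - tau) / tau) * Dr mu F gF (xf (Suc k)) xs
                 - (eta * \<delta> / 4) * norm (y (Suc k) - ys) ^ 2
                 + 2 * inner (y (Suc k) - ys) (x (Suc k) - xs)"
  proof -
  have L: "L > 0" using muL by linarith
  have Dlo: "Dr mu F gF a b \<ge> mu / 4 * norm (a - b) ^ 2" for a b
    using grad_ineq[OF grad sconv, of a b] unfolding Dr_F by simp
  have Dup: "Dr mu F gF a b \<le> L / 2 * norm (a - b) ^ 2" for a b
  proof -
    have "0 \<le> mu / 4 * norm (a - b) ^ 2" using muL by simp
    thus ?thesis using descent[OF grad smooth, of a b] unfolding Dr_F by linarith
  qed
  have D0: "Dr mu F gF a b \<ge> 0" for a b
  proof -
    have "0 \<le> mu / 4 * norm (a - b) ^ 2" using muL by simp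
    thus ?thesis using Dlo[of a b] by linarith
  qed
  have Coco: "Dr mu F gF a b \<ge> 1 / (2 * L) * norm (grad_r mu gF a - grad_r mu gF b) ^ 2" for a b
    by (rule coco[OF L D0 Dup])
  have Dself: "Dr mu F gF a a = 0" for a by (simp add: Dr_def)
  show ?thesis unfolding Let_def
  proof
    fix k
    let ?ys = "gF xs - (mu / 2) *\<^sub>R xs"
    let ?\<delta> = "min 1 (1 / (2 * eta * L))"
    let ?D = "\<lambda>w. Dr mu F gF w xs"
    let ?xk = "x k" and ?x1 = "x (Suc k)" and ?g = "xg k" and ?f0 = "xf k" and ?f1 = "xf (Suc k)"
    let ?p = "?x1 - ?xk" and ?e = "?x1 - xs" and ?q = "?x1 - ?g" and ?gx = "?g - xs"
    let ?G = "grad_r mu gF ?g - grad_r mu gF xs" and ?Y = "y (Suc k) - ?ys"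
    have ysg: "grad_r mu gF xs = ?ys" by (simp add: grad_r_def)
    have pexp: "?p = eta *\<^sub>R (?Y - alpha *\<^sub>R ?q - ?G)"
      using x_upd[of k] unfolding ysg by (simp add: algebra_simps)
    have Yexp: "?Y = (1 / eta) *\<^sub>R ?p + alpha *\<^sub>R ?q + ?G"
      unfolding pexp using params by (simp add: algebra_simps)
    have f1exp: "?f1 - ?g = (2 * tau / (2 - tau)) *\<^sub>R ?p"
      using xf_upd[of k] by simp
    have eexp: "tau *\<^sub>R ?e = tau *\<^sub>R ?gx - (1 - tau) *\<^sub>R (?f0 - ?g) + tau *\<^sub>R ?p"
      unfolding xg_def by (simp add: algebra_simps)
    have E1: "norm ?e ^ 2 = norm (?xk - xs) ^ 2 + 2 * inner ?p ?e - norm ?p ^ 2"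
    proof -
      have "?xk - xs = ?e - ?p" by simp
      hence "norm (?xk - xs) ^ 2 = norm (?e - ?p) ^ 2" by simp
      thus ?thesis by (simp add: power2_norm_eq_inner inner_diff_left inner_diff_right inner_commute)
    qed
    have E2: "inner ?p ?e = eta * (inner ?Y ?e - alpha * inner ?q ?e - inner ?G ?e)"
      by (subst pexp) (simp add: inner_diff_left)
    have E3: "2 * inner ?q ?e = norm ?e ^ 2 + norm ?q ^ 2 - norm ?gx ^ 2"
    proof -
      have "?gx = ?e - ?q" by simp
      hence "norm ?gx ^ 2 = norm (?e - ?q) ^ 2" by simp
      thus ?thesis by (simp add: power2_norm_eq_inner inner_diff_left inner_diff_right inner_commute)
    qed
    have E4: "tau * inner ?G ?e = tau * inner ?G ?gx - (1 - tau) * inner ?G (?f0 - ?g) + tau * inner ?G ?p"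
    proof -
      have "inner ?G (tau *\<^sub>R ?e) = inner ?G (tau *\<^sub>R ?gx - (1 - tau) *\<^sub>R (?f0 - ?g) + tau *\<^sub>R ?p)"
        unfolding eexp ..
      thus ?thesis by (simp only: inner_add_right inner_diff_right inner_scaleR_right)
    qed
    have E5: "inner ?G (?f1 - ?g) = (2 * tau / (2 - tau)) * inner ?G ?p"
      unfolding f1exp by simp
    have T1: "inner ?G (?f0 - ?g) = ?D ?f0 - ?D ?g - Dr mu F gF ?f0 ?g"
      using three_point[of mu F gF ?f0 xs ?g] by linarith
    have T2: "inner ?G (?f1 - ?g) = ?D ?f1 - ?D ?g - Dr mu F gF ?f1 ?g"
      using three_point[of mu F gF ?f1 xs ?g] by linarith
    have T3: "inner ?G ?gx = ?D ?g + Dr mu F gF xs ?g"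
    proof -
      have "inner ?G (xs - ?g) = - inner ?G ?gx" by (metis inner_minus_right minus_diff_eq)
      thus ?thesis using three_point[of mu F gF xs xs ?g] Dself[of xs] by linarith
    qed
    show "(1 / eta) * norm ?e ^ 2 \<le> (1 / eta) * norm (?xk - xs) ^ 2
                 - (3 * alpha / 4) * norm ?e ^ 2
                 + (2 * (1 - tau) / tau) * ?D ?f0
                 - ((2 - tau) / tau) * ?D ?f1
                 - (eta * ?\<delta> / 4) * norm ?Y ^ 2
                 + 2 * inner ?Y ?e"
    proof (rule final_arith[OF E1 E2 E3 E4 E5 T1 T2 T3])
      show "Dr mu F gF ?f0 ?g \<ge> 0" by (rule D0)
      have "norm (?f1 - ?g) ^ 2 = (2 * tau / (2 - tau)) ^ 2 * norm ?p ^ 2"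
        unfolding f1exp by (simp only: norm_scaleR power_mult_distrib power2_abs)
      thus "Dr mu F gF ?f1 ?g \<le> L / 2 * ((2 * tau / (2 - tau)) ^ 2 * norm ?p ^ 2)"
        using Dup[of ?f1 ?g] by simp
      show "?D ?g \<ge> mu / 4 * norm ?gx ^ 2" by (rule Dlo)
      show "Dr mu F gF xs ?g \<ge> mu / 4 * norm ?gx ^ 2" using Dlo[of xs ?g] by (simp add: norm_minus_commute)
      show "Dr mu F gF xs ?g \<ge> 1 / (2 * L) * norm ?G ^ 2" using Coco[of xs ?g] by (simp add: norm_minus_commute)
      have "norm ?Y ^ 2 \<le> 2 * norm ((1 / eta) *\<^sub>R ?p) ^ 2 + 4 * norm (alpha *\<^sub>R ?q) ^ 2 + 4 * norm ?G ^ 2"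
        unfolding Yexp by (rule norm3)
      thus "norm ?Y ^ 2 \<le> 2 * ((1 / eta) ^ 2 * norm ?p ^ 2) + 4 * (alpha ^ 2 * norm ?q ^ 2) + 4 * norm ?G ^ 2"
        by (simp only: norm_scaleR power_mult_distrib power2_abs)
    qed (use params tau alpha_le muL eta_le in auto)
  qed
qed

end
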